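(* Let $X$ be a real Hilbert space, let $\gamma>0$, and let $f:X\to(-\infty,+\infty]$ be a proper $\Phi_{lsc}^{\mathbb{R}}$-convex function such that $\mathrm{dom}\, f=\mathrm{dom}\,\partial_{lsc}^{\mathbb{R}} f$. Let $x_0\in\mathrm{dom}\, f$. If there exist $a_0\geq -\frac{1}{2\gamma}$ and $x\in X$ such that $$x\in\arg\min_{z\in X}\Big[f(z)+\Big(\tfrac{1}{2\gamma}+a_0\Big)\|z-x_0\|^2\Big],$$ then $\big(J_\gamma(x_0)-J_\gamma(x)\big)\cap\partial_{lsc}^{\mathbb{R}} f(x)\neq\emptyset$, where $J_\gamma(x_0)-J_\gamma(x)=\{\phi_0-\phi:\ \phi_0\in J_\gamma(x_0),\ \phi\in J_\gamma(x)\}\subset\mathbb{R}\times X$.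
   Context: $\Phi_{lsc}^{\mathbb{R}}=\{\phi=(a,u)\in\mathbb{R}\times X\}$, where $\phi=(a,u)$ is identified with the function $\phi(x)=-a\|x\|^2+\langle u,x\rangle$; differences of elements are taken componentwise in $\mathbb{R}\times X$. A function $f:X\to(-\infty,+\infty]$ is $\Phi_{lsc}^{\mathbb{R}}$-convex if $f(x)=\sup\{\phi(x):\phi\in\Phi_{lsc}^{\mathbb{R}},\ \phi\le f\}$ for all $x\in X$. For $x_0\in\mathrm{dom}\, f$, the $\Phi_{lsc}^{\mathbb{R}}$-subdifferential is $\partial_{lsc}^{\mathbb{R}} f(x_0)=\{\phi\in\Phi_{lsc}^{\mathbb{R}}: f(y)-f(x_0)\ge\phi(y)-\phi(x_0)\ \forall y\in X\}$, and $\mathrm{dom}\,\partial_{lsc}^{\mathbb{R}} f=\{x: \partial_{lsc}^{\mathbb{R}} f(x)\neq\emptyset\}$. The duality map is $J_\gamma(x)=\partial_{lsc}^{\mathbb{R}}\big(\tfrac{1}{2\gamma}\|\cdot\|^2\big)(x)=\{(a,(\tfrac1\gamma+2a)x): a\in\mathbb{R},\ 2\gamma a\ge -1\}$. *)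

theory Defs
  imports "HOL-Analysis.Analysis"
begin

text \<open>Elements of Phi_lsc^R are pairs (a,u) in R x X, acting as x |-> -a ||x||^2 + <u,x>.\<close>
definition phi_app :: "real \<times> 'a::real_inner \<Rightarrow> 'a \<Rightarrow> real" where
  "phi_app p x = - fst p * (norm x)\<^sup>2 + inner (snd p) x"

definition effdom :: "('a \<Rightarrow> ereal) \<Rightarrow> 'a set" where
  "effdom f = {x. f x < \<infinity>}"

definition proper_fun :: "('a \<Rightarrow> ereal) \<Rightarrow> bool" where
  "proper_fun f \<longleftrightarrow> (\<forall>x. f x \<noteq> -\<infinity>) \<and> effdom f \<noteq> {}"

definition phi_convex :: "('a::real_inner \<Rightarrow> ereal) \<Rightarrow> bool" where
  "phi_convex f \<longleftrightarrow>
     (\<forall>x. f x = Sup {ereal (phi_app p x) | p. \<forall>y. ereal (phi_app p y) \<le> f y})"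

definition phi_subdiff :: "('a::real_inner \<Rightarrow> ereal) \<Rightarrow> 'a \<Rightarrow> (real \<times> 'a) set" where
  "phi_subdiff f x0 = (if x0 \<in> effdom f then
     {p. \<forall>y. f y - f x0 \<ge> ereal (phi_app p y - phi_app p x0)} else {})"

definition subdiff_dom :: "('a::real_inner \<Rightarrow> ereal) \<Rightarrow> 'a set" where
  "subdiff_dom f = {x. phi_subdiff f x \<noteq> {}}"

definition dualmap :: "real \<Rightarrow> 'a::real_inner \<Rightarrow> (real \<times> 'a) set" where
  "dualmap \<gamma> x = phi_subdiff (\<lambda>z. ereal ((norm z)\<^sup>2 / (2 * \<gamma>))) x"

end

theory Submission
  imports Defs
begin

lemma norm_diff_sq: "(norm (y - x))\<^sup>2 = (norm y)\<^sup>2 - 2 * inner x y + (norm (x::'a::real_inner))\<^sup>2"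
  by (simp add: power2_norm_eq_inner inner_diff_left inner_diff_right inner_commute)

lemma dual_mem:
  assumes g: "\<gamma> > 0" and b: "b \<ge> 0"
  shows "(b - 1/(2*\<gamma>), (2*b) *\<^sub>R x) \<in> dualmap \<gamma> (x::'a::real_inner)"
proof -
  have "\<forall>y. ereal ((norm y)\<^sup>2 / (2 * \<gamma>)) - ereal ((norm x)\<^sup>2 / (2 * \<gamma>))
     \<ge> ereal (phi_app (b - 1/(2*\<gamma>), (2*b) *\<^sub>R x) y - phi_app (b - 1/(2*\<gamma>), (2*b) *\<^sub>R x) x)"
  proof
    fix y :: 'a
    have e: "(norm y)\<^sup>2 / (2 * \<gamma>) - (norm x)\<^sup>2 / (2 * \<gamma>)
      - (phi_app (b - 1/(2*\<gamma>), (2*b) *\<^sub>R x) y - phi_app (b - 1/(2*\<gamma>), (2*b) *\<^sub>R x) x)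
      = b * (norm (y - x))\<^sup>2"
      using g unfolding phi_app_def norm_diff_sq
      by (simp add: power2_norm_eq_inner field_simps)
    have "0 \<le> b * (norm (y - x))\<^sup>2" using b by simp
    then show "ereal ((norm y)\<^sup>2 / (2 * \<gamma>)) - ereal ((norm x)\<^sup>2 / (2 * \<gamma>))
     \<ge> ereal (phi_app (b - 1/(2*\<gamma>), (2*b) *\<^sub>R x) y - phi_app (b - 1/(2*\<gamma>), (2*b) *\<^sub>R x) x)"
      using e by simp
  qed
  then show ?thesis unfolding dualmap_def phi_subdiff_def effdom_def by simp
qed

theorem proposition3:
  fixes f :: "'a::{real_inner, complete_space} \<Rightarrow> ereal"
    and \<gamma> :: real and x0 :: 'a
  assumes "\<gamma> > 0"
    and "proper_fun f"
    and "phi_convex f"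
    and "effdom f = subdiff_dom f"
    and "x0 \<in> effdom f"
    and "a0 \<ge> - 1 / (2 * \<gamma>)"
    and "\<forall>z. f x + ereal ((1 / (2 * \<gamma>) + a0) * (norm (x - x0))\<^sup>2)
              \<le> f z + ereal ((1 / (2 * \<gamma>) + a0) * (norm (z - x0))\<^sup>2)"
  shows "{(fst p0 - fst p, snd p0 - snd p) | p0 p. p0 \<in> dualmap \<gamma> x0 \<and> p \<in> dualmap \<gamma> x}
           \<inter> phi_subdiff f x \<noteq> {}"
proof -
  define c where "c = 1 / (2 * \<gamma>) + a0"
  have c0: "c \<ge> 0" using assms(6) unfolding c_def by simp
  have min: "\<And>z. f x + ereal (c * (norm (x - x0))\<^sup>2) \<le> f z + ereal (c * (norm (z - x0))\<^sup>2)"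
    using assms(7) unfolding c_def by blast
  have fx0: "f x0 < \<infinity>" using assms(5) unfolding effdom_def by simp
  have "f x + ereal (c * (norm (x - x0))\<^sup>2) \<le> f x0" using min[of x0] by simp
  hence fxi: "f x < \<infinity>" using fx0 by (cases "f x") auto
  have fxm: "f x \<noteq> -\<infinity>" using assms(2) unfolding proper_fun_def by simp
  obtain r where r: "f x = ereal r" using fxi fxm by (cases "f x") auto
  have p1: "(c - 1/(2*\<gamma>), (2*c) *\<^sub>R x0) \<in> dualmap \<gamma> x0" using dual_mem[OF assms(1) c0] .
  have p2: "(0 - 1/(2*\<gamma>), (2*0) *\<^sub>R x) \<in> dualmap \<gamma> x" using dual_mem[OF assms(1), of 0] by simp
  have inS: "(c, (2*c) *\<^sub>R x0) \<in> phi_subdiff f x"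
  proof -
    have "\<forall>y. f y - f x \<ge> ereal (phi_app (c, (2*c) *\<^sub>R x0) y - phi_app (c, (2*c) *\<^sub>R x0) x)"
    proof
      fix y
      have eq: "phi_app (c, (2*c) *\<^sub>R x0) y - phi_app (c, (2*c) *\<^sub>R x0) x
          = c * (norm (x - x0))\<^sup>2 - c * (norm (y - x0))\<^sup>2"
        unfolding phi_app_def norm_diff_sq
        by (simp add: algebra_simps inner_commute)
      have m: "ereal r + ereal (c * (norm (x - x0))\<^sup>2) \<le> f y + ereal (c * (norm (y - x0))\<^sup>2)"
        using min[of y] r by simp
      show "f y - f x \<ge> ereal (phi_app (c, (2*c) *\<^sub>R x0) y - phi_app (c, (2*c) *\<^sub>R x0) x)"
        unfolding eq r using m by (cases "f y") auto
    qed
    then show ?thesis unfolding phi_subdiff_def effdom_def using fxi by simp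
  qed
  have "(c, (2*c) *\<^sub>R x0) \<in> {(fst p0 - fst p, snd p0 - snd p) | p0 p. p0 \<in> dualmap \<gamma> x0 \<and> p \<in> dualmap \<gamma> x}"
    using p1 p2 by (intro CollectI exI[of _ "(c - 1/(2*\<gamma>), (2*c) *\<^sub>R x0)"] exI[of _ "(0 - 1/(2*\<gamma>), (2*0) *\<^sub>R x)"]) auto
  then show ?thesis using inS by blast
qed

end
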